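(* Let $G$ be a finite group with $|G|\ge2$, $S\subseteq G$ symmetric, $H=\mathrm{Cay}(G,S)$ unweighted, $\alpha\in(0,1)$, and $C\ge1$. Let $S_\alpha=\{s\in\bar S:\mathrm{imp}(s)\ge\alpha\}$. Then there exist $\ell\ge\frac{\alpha}{C\log^2|G|}|S_\alpha|$, distinct $s_1,\dots,s_\ell\in S_\alpha$ and vectors $v_1,\dots,v_\ell\in\mathbb{R}^G$ with $v_i^\top L_Hv_i>0$ such that $\mathrm{score}(s_i,v_i)\ge\alpha$ for all $i\in[\ell]$ and $\mathrm{score}(s_i,v_j)\le\frac{\alpha}{C\log^2|G|}$ for all $1\le j<i\le\ell$.
   Context: Logarithms are base 2. For $g\in G$, $A_g\in\{0,1\}^{G\times G}$ is the permutation matrix with $(A_g)_{u,v}=1$ iff $v=ug$. $S$ symmetric means $s\in S\Rightarrow s^{-1}\in S$; $\bar S\subseteq S$ contains exactly one element of each pair $\{s,s^{-1}\}$ with $s\neq s^{-1}$ and every $s\in S$ with $s=s^{-1}$. $L_s=2I-A_s-A_{s^{-1}}$ if $s\ne s^{-1}$, $L_s=I-A_s$ if $s=s^{-1}$; $L_H=\sum_{s\in\bar S}L_s$. For $v$ with $v^\top L_Hv>0$, $\mathrm{score}(s,v)=\frac{v^\top L_sv}{v^\top L_Hv}$, and $\mathrm{imp}(s)=\max\{\mathrm{score}(s,v):v^\top L_Hv>0\}$. *)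

theory Defs
  imports "HOL-Algebra.Group" Complex_Main
begin

text \<open>Matrices indexed by G x G are functions 'a => 'a => real (only entries on the
carrier matter); vectors in R^G are functions 'a => real.\<close>

definition Amat :: "('a, 'b) monoid_scheme \<Rightarrow> 'a \<Rightarrow> 'a \<Rightarrow> 'a \<Rightarrow> real" where
  "Amat G g u w = (if w = u \<otimes>\<^bsub>G\<^esub> g then 1 else 0)"

definition Imat :: "'a \<Rightarrow> 'a \<Rightarrow> real" where
  "Imat u w = (if u = w then 1 else 0)"

definition Lmat :: "('a, 'b) monoid_scheme \<Rightarrow> 'a \<Rightarrow> 'a \<Rightarrow> 'a \<Rightarrow> real" where
  "Lmat G s u w =
     (if s \<noteq> inv\<^bsub>G\<^esub> s then 2 * Imat u w - Amat G s u w - Amat G (inv\<^bsub>G\<^esub> s) u w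
      else Imat u w - Amat G s u w)"

definition LH :: "('a, 'b) monoid_scheme \<Rightarrow> 'a set \<Rightarrow> 'a \<Rightarrow> 'a \<Rightarrow> real" where
  "LH G Sbar u w = (\<Sum>s\<in>Sbar. Lmat G s u w)"

definition qform :: "('a, 'b) monoid_scheme \<Rightarrow> ('a \<Rightarrow> 'a \<Rightarrow> real) \<Rightarrow> ('a \<Rightarrow> real) \<Rightarrow> real" where
  "qform G M v = (\<Sum>u\<in>carrier G. \<Sum>w\<in>carrier G. v u * M u w * v w)"

definition score :: "('a, 'b) monoid_scheme \<Rightarrow> 'a set \<Rightarrow> 'a \<Rightarrow> ('a \<Rightarrow> real) \<Rightarrow> real" where
  "score G Sbar s v = qform G (Lmat G s) v / qform G (LH G Sbar) v"

text \<open>imp(s) = max of scores over v with v^T L_H v > 0 (the max exists whenever the set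
is nonempty, so it equals the Sup). Convention: 0 if no such v exists.\<close>
definition imp :: "('a, 'b) monoid_scheme \<Rightarrow> 'a set \<Rightarrow> 'a \<Rightarrow> real" where
  "imp G Sbar s =
     (let X = {score G Sbar s v | v. qform G (LH G Sbar) v > 0} in
      if X = {} then 0 else Sup X)"

definition symmetric_set :: "('a, 'b) monoid_scheme \<Rightarrow> 'a set \<Rightarrow> bool" where
  "symmetric_set G S \<longleftrightarrow> S \<subseteq> carrier G \<and> (\<forall>s\<in>S. inv\<^bsub>G\<^esub> s \<in> S)"

definition is_Sbar :: "('a, 'b) monoid_scheme \<Rightarrow> 'a set \<Rightarrow> 'a set \<Rightarrow> bool" where
  "is_Sbar G S Sbar \<longleftrightarrow> Sbar \<subseteq> S
     \<and> (\<forall>s\<in>S. s = inv\<^bsub>G\<^esub> s \<longrightarrow> s \<in> Sbar)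
     \<and> (\<forall>s\<in>S. s \<noteq> inv\<^bsub>G\<^esub> s \<longrightarrow> (s \<in> Sbar \<longleftrightarrow> inv\<^bsub>G\<^esub> s \<notin> Sbar))"

definition S_alpha :: "('a, 'b) monoid_scheme \<Rightarrow> 'a set \<Rightarrow> real \<Rightarrow> 'a set" where
  "S_alpha G Sbar \<alpha> = {s \<in> Sbar. imp G Sbar s \<ge> \<alpha>}"

end

theory Submission
  imports Defs "HOL-Analysis.Analysis"
begin

definition Dq :: "('a, 'b) monoid_scheme \<Rightarrow> 'a \<Rightarrow> ('a \<Rightarrow> real) \<Rightarrow> real" where
  "Dq G s v = (\<Sum>u\<in>carrier G. (v u - v (u \<otimes>\<^bsub>G\<^esub> s))\<^sup>2)"

definition cf :: "('a, 'b) monoid_scheme \<Rightarrow> 'a \<Rightarrow> real" where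
  "cf G s = (if s \<noteq> inv\<^bsub>G\<^esub> s then 1 else 1/2)"

lemma sum_reindex_mult:
  fixes G (structure)
  assumes "group G" "s \<in> carrier G"
  shows "(\<Sum>u\<in>carrier G. f (u \<otimes>\<^bsub>G\<^esub> s)) = (\<Sum>u\<in>carrier G. (f u :: real))"
proof -
  interpret group G by fact
  show ?thesis
    by (rule sum.reindex_bij_witness[where i="\<lambda>u. u \<otimes> inv s" and j="\<lambda>u. u \<otimes> s"])
       (use assms(2) in \<open>auto simp: m_assoc\<close>)
qed

lemma qform_I:
  assumes "u \<in> carrier G" "finite (carrier G)"
  shows "(\<Sum>w\<in>carrier G. v u * Imat u w * v w) = v u * v u"
proof -
  have "(\<Sum>w\<in>carrier G. v u * Imat u w * v w) = (\<Sum>w\<in>carrier G. if u = w then v u * v w else 0)"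
    by (rule sum.cong) (auto simp: Imat_def)
  also have "\<dots> = v u * v u" using assms by (simp add: sum.delta)
  finally show ?thesis .
qed

lemma qform_A:
  fixes G (structure)
  assumes "group G" "u \<in> carrier G" "g \<in> carrier G" "finite (carrier G)"
  shows "(\<Sum>w\<in>carrier G. v u * Amat G g u w * v w) = v u * v (u \<otimes>\<^bsub>G\<^esub> g)"
proof -
  interpret group G by fact
  have "(\<Sum>w\<in>carrier G. v u * Amat G g u w * v w) = (\<Sum>w\<in>carrier G. if w = u \<otimes> g then v u * v w else 0)"
    by (rule sum.cong) (auto simp: Amat_def)
  also have "\<dots> = v u * v (u \<otimes> g)" using assms by (simp add: sum.delta')
  finally show ?thesis .
qed

lemma qform_L:
  fixes G (structure)
  assumes "group G" "finite (carrier G)" "s \<in> carrier G"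
  shows "qform G (Lmat G s) v = cf G s * Dq G s v"
proof -
  interpret group G by fact
  let ?V = "carrier G"
  have r1: "(\<Sum>u\<in>?V. v u * v (u \<otimes> inv s)) = (\<Sum>u\<in>?V. v u * v (u \<otimes> s))"
  proof -
    have "(\<Sum>u\<in>?V. v u * v (u \<otimes> inv s)) = (\<Sum>u\<in>?V. v (u \<otimes> s) * v (u \<otimes> s \<otimes> inv s))"
      using sum_reindex_mult[OF assms(1) assms(3), of "\<lambda>u. v u * v (u \<otimes> inv s)"] by simp
    also have "\<dots> = (\<Sum>u\<in>?V. v u * v (u \<otimes> s))"
      by (rule sum.cong) (use assms(3) in \<open>auto simp: m_assoc\<close>)
    finally show ?thesis .
  qed
  have r2: "(\<Sum>u\<in>?V. (v (u \<otimes> s))\<^sup>2) = (\<Sum>u\<in>?V. (v u)\<^sup>2)"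
    using sum_reindex_mult[OF assms(1) assms(3), of "\<lambda>u. (v u)\<^sup>2"] by simp
  have D: "Dq G s v = 2 * (\<Sum>u\<in>?V. (v u)\<^sup>2) - 2 * (\<Sum>u\<in>?V. v u * v (u \<otimes> s))"
  proof -
    have "Dq G s v = (\<Sum>u\<in>?V. (v u)\<^sup>2 + (v (u \<otimes> s))\<^sup>2 - 2 * (v u * v (u \<otimes> s)))"
      unfolding Dq_def by (rule sum.cong) (auto simp: power2_eq_square algebra_simps)
    also have "\<dots> = 2 * (\<Sum>u\<in>?V. (v u)\<^sup>2) - 2 * (\<Sum>u\<in>?V. v u * v (u \<otimes> s))"
      by (simp add: sum.distrib sum_subtractf sum_distrib_left r2)
    finally show ?thesis .
  qed
  show ?thesis
  proof (cases "s \<noteq> inv s")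
    case True
    have "qform G (Lmat G s) v = (\<Sum>u\<in>?V. 2 * (v u * v u) - v u * v (u \<otimes> s) - v u * v (u \<otimes> inv s))"
      unfolding qform_def
    proof (rule sum.cong)
      fix u assume u: "u \<in> ?V"
      have "(\<Sum>w\<in>?V. v u * Lmat G s u w * v w) = (\<Sum>w\<in>?V. 2 * (v u * Imat u w * v w) - v u * Amat G s u w * v w - v u * Amat G (inv s) u w * v w)"
        by (rule sum.cong) (use True in \<open>auto simp: Lmat_def algebra_simps\<close>)
      also have "\<dots> = 2 * (v u * v u) - v u * v (u \<otimes> s) - v u * v (u \<otimes> inv s)"
        using u assms by (simp add: sum_subtractf sum_distrib_left[symmetric] qform_I qform_A)
      finally show "(\<Sum>w\<in>?V. v u * Lmat G s u w * v w) = \<dots>" .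
    qed simp
    also have "\<dots> = Dq G s v"
      unfolding D by (simp add: sum_subtractf sum_distrib_left r1 power2_eq_square sum_negf)
    finally show ?thesis using True by (simp add: cf_def)
  next
    case False
    have "qform G (Lmat G s) v = (\<Sum>u\<in>?V. v u * v u - v u * v (u \<otimes> s))"
      unfolding qform_def
    proof (rule sum.cong)
      fix u assume u: "u \<in> ?V"
      have "(\<Sum>w\<in>?V. v u * Lmat G s u w * v w) = (\<Sum>w\<in>?V. (v u * Imat u w * v w) - v u * Amat G s u w * v w)"
        by (rule sum.cong) (use False in \<open>auto simp: Lmat_def algebra_simps\<close>)
      also have "\<dots> = v u * v u - v u * v (u \<otimes> s)"
        using u assms by (simp add: sum_subtractf qform_I qform_A)
      finally show "(\<Sum>w\<in>?V. v u * Lmat G s u w * v w) = \<dots>" .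
    qed simp
    also have "\<dots> = Dq G s v / 2"
      unfolding D by (simp add: sum_subtractf power2_eq_square)
    finally show ?thesis using False by (simp add: cf_def)
  qed
qed

lemma qform_LH:
  assumes "finite Sbar"
  shows "qform G (LH G Sbar) v = (\<Sum>s\<in>Sbar. qform G (Lmat G s) v)"
  unfolding qform_def LH_def
  by (simp add: sum_distrib_left sum_distrib_right sum.swap[of _ Sbar])


lemma cont_coord: "continuous_on A (\<lambda>v::'a \<Rightarrow> real. v u)"
  by (rule continuous_on_subset[OF continuous_on_product_coordinates]) simp

lemma cont_qform: "continuous_on A (qform G M)"
  unfolding qform_def by (intro continuous_intros cont_coord)

lemma Dq_nonneg: "Dq G t v \<ge> 0"
  unfolding Dq_def by (simp add: sum_nonneg)

lemma cf_pos: "cf G t > 0"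
  unfolding cf_def by simp

lemma closed_cond: "closed {w::'a\<Rightarrow>real. P \<longrightarrow> w y = 0}"
proof (cases P)
  case True
  then show ?thesis
    using closed_Collect_eq[of "\<lambda>w::'a\<Rightarrow>real. w y" "\<lambda>w. 0", OF cont_coord continuous_on_const] by simp
qed simp

lemma div_scale:
  fixes c x y N :: real
  assumes "N > 0"
  shows "c * (x / N) / (y / N) = c * x / y"
  using assms by (cases "y = 0") (simp_all add: field_simps)

lemma attain:
  fixes G (structure)
  assumes grp: "group G" and fin: "finite (carrier G)" and Sb: "Sbar \<subseteq> carrier G"
    and s: "s \<in> Sbar"
    and ne: "{score G Sbar s v | v. qform G (LH G Sbar) v > 0} \<noteq> {}"
  shows "\<exists>v. qform G (LH G Sbar) v > 0 \<and>
     (\<forall>x \<in> {score G Sbar s v | v. qform G (LH G Sbar) v > 0}. x \<le> score G Sbar s v)"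
proof -
  interpret group G by fact
  let ?V = "carrier G"
  let ?Q = "qform G (LH G Sbar)"
  have finS: "finite Sbar" using fin Sb finite_subset by blast
  have QH: "?Q v = (\<Sum>t\<in>Sbar. cf G t * Dq G t v)" for v
    unfolding qform_LH[OF finS] using qform_L[OF grp fin] Sb by (intro sum.cong) auto
  have SC: "score G Sbar s v = cf G s * Dq G s v / (\<Sum>t\<in>Sbar. cf G t * Dq G t v)" for v
    unfolding score_def QH using qform_L[OF grp fin] Sb s by auto
  define E where "E = {(u, u \<otimes> t) | u t. u \<in> ?V \<and> t \<in> Sbar}"
  define R where "R = (E \<union> E\<inverse>)\<^sup>*"
  have EV: "E \<union> E\<inverse> \<subseteq> ?V \<times> ?V" using Sb by (auto simp: E_def)
  have RV: "x \<in> ?V" if "(u,x) \<in> R" "u \<in> ?V" for u x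
    using that(1) unfolding R_def
    by (induction rule: rtrancl_induct) (use EV that(2) in auto)
  have symR0: "sym R" unfolding R_def by (rule sym_rtrancl[OF sym_Un_converse])
  have symR: "(x,u) \<in> R" if "(u,x) \<in> R" for u x
    using symR0 that by (rule symD)
  have transR: "(u,y) \<in> R" if "(u,x) \<in> R" "(x,y) \<in> R" for u x y
    using that unfolding R_def by (rule rtrancl_trans)
  define rep where "rep u = (SOME x. (u,x) \<in> R)" for u
  have rep_in: "(u, rep u) \<in> R" for u
    unfolding rep_def by (rule someI[of _ u]) (simp add: R_def)
  have rep_eq: "rep x = rep u" if "(u,x) \<in> R" for u x
  proof -
    have "(\<lambda>y. (x,y) \<in> R) = (\<lambda>y. (u,y) \<in> R)"
      using that symR transR by (intro ext) blast
    then show ?thesis unfolding rep_def by simp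
  qed
  have Eedge: "(u, u \<otimes> t) \<in> R" if "u \<in> ?V" "t \<in> Sbar" for u t
    using that unfolding R_def E_def by blast
  define P where "P (v::'a \<Rightarrow> real) = (\<lambda>u. if u \<in> ?V then v u - v (rep u) else 0)" for v
  have DP: "Dq G t (P v) = Dq G t v" if t: "t \<in> Sbar" for t v
    unfolding Dq_def
  proof (rule sum.cong)
    fix u assume u: "u \<in> ?V"
    have "u \<otimes> t \<in> ?V" using u t Sb by auto
    moreover have "rep (u \<otimes> t) = rep u" using rep_eq Eedge u t by blast
    ultimately show "(P v u - P v (u \<otimes> t))\<^sup>2 = (v u - v (u \<otimes> t))\<^sup>2"
      using u unfolding P_def by simp
  qed simp
  define Z where "Z = {w::'a \<Rightarrow> real. (\<forall>u. u \<in> ?V \<longrightarrow> w (rep u) = 0) \<and> (\<forall>x. x \<notin> ?V \<longrightarrow> w x = 0)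
     \<and> (\<Sum>u\<in>?V. (w u)\<^sup>2) = 1}"
  have Zpos: "?Q w > 0" if w: "w \<in> Z" for w
  proof (rule ccontr)
    assume "\<not> ?Q w > 0"
    moreover have "?Q w \<ge> 0" unfolding QH
      by (intro sum_nonneg mult_nonneg_nonneg Dq_nonneg less_imp_le[OF cf_pos])
    ultimately have "(\<Sum>t\<in>Sbar. cf G t * Dq G t w) = 0" unfolding QH by linarith
    moreover have nn: "\<And>t. t \<in> Sbar \<Longrightarrow> 0 \<le> cf G t * Dq G t w"
      by (intro mult_nonneg_nonneg Dq_nonneg less_imp_le[OF cf_pos])
    ultimately have "\<forall>t\<in>Sbar. cf G t * Dq G t w = 0"
      using sum_nonneg_eq_0_iff[OF finS nn] by simp
    then have D0: "\<forall>t\<in>Sbar. Dq G t w = 0" by (auto simp: cf_def split: if_splits)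
    have edge: "w (u \<otimes> t) = w u" if "t \<in> Sbar" "u \<in> ?V" for u t
    proof -
      have "(\<Sum>u\<in>?V. (w u - w (u \<otimes> t))\<^sup>2) = 0" using D0 that(1) unfolding Dq_def by simp
      then have "\<forall>u\<in>?V. (w u - w (u \<otimes> t))\<^sup>2 = 0"
        using sum_nonneg_eq_0_iff[OF fin, of "\<lambda>u. (w u - w (u \<otimes> t))\<^sup>2"] by simp
      then show ?thesis using that(2) by simp
    qed
    have path: "w x = w u" if "(u,x) \<in> R" "u \<in> ?V" for u x
      using that(1) unfolding R_def
    proof (induction rule: rtrancl_induct)
      case base then show ?case by simp
    next
      case (step y z)
      from step(2) show ?case
      proof
        assume "(y,z) \<in> E"
        then obtain t where "t \<in> Sbar" "y \<in> ?V" "z = y \<otimes> t" unfolding E_def by blast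
        then show ?thesis using step(3) edge by simp
      next
        assume "(y,z) \<in> E\<inverse>"
        then obtain t where "t \<in> Sbar" "z \<in> ?V" "y = z \<otimes> t" unfolding E_def by blast
        then show ?thesis using step(3) edge by simp
      qed
    qed
    have "\<forall>u\<in>?V. w u = 0"
    proof
      fix u assume u: "u \<in> ?V"
      have "w (rep u) = w u" using path[OF rep_in u] .
      moreover have "w (rep u) = 0" using w u unfolding Z_def by blast
      ultimately show "w u = 0" by simp
    qed
    then have "(\<Sum>u\<in>?V. (w u)\<^sup>2) = 0" by simp
    then show False using w unfolding Z_def by simp
  qed
  have normal: "\<exists>w\<in>Z. score G Sbar s w = score G Sbar s v" if v: "?Q v > 0" for v
  proof -
    define w0 where "w0 = P v"
    have Dw0: "t \<in> Sbar \<Longrightarrow> Dq G t w0 = Dq G t v" for t unfolding w0_def using DP by blast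
    define N where "N = (\<Sum>u\<in>?V. (w0 u)\<^sup>2)"
    have N0: "N \<ge> 0" unfolding N_def by (simp add: sum_nonneg)
    have "N \<noteq> 0"
    proof
      assume "N = 0"
      then have "\<forall>u\<in>?V. w0 u = 0" unfolding N_def using sum_nonneg_eq_0_iff[OF fin, of "\<lambda>u. (w0 u)\<^sup>2"] by simp
      then have "\<forall>t\<in>Sbar. Dq G t w0 = 0" unfolding Dq_def using Sb by auto
      then have "?Q v = 0" unfolding QH using Dw0 by simp
      then show False using v by simp
    qed
    with N0 have Npos: "N > 0" by simp
    define w where "w = (\<lambda>u. w0 u / sqrt N)"
    have Dw: "Dq G t w = Dq G t w0 / N" for t
      unfolding Dq_def w_def using Npos
      by (simp add: sum_divide_distrib power_divide diff_divide_distrib[symmetric])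
    have e1: "Dq G s w = Dq G s v / N" using Dw Dw0 s by simp
    have e2: "(\<Sum>t\<in>Sbar. cf G t * Dq G t w) = (\<Sum>t\<in>Sbar. cf G t * Dq G t v) / N"
      unfolding sum_divide_distrib using Dw Dw0 by (intro sum.cong) auto
    have "score G Sbar s w = score G Sbar s v"
      unfolding SC e1 e2 using Npos by (rule div_scale)
    moreover have "w \<in> Z"
    proof -
      have "w (rep u) = 0" if u: "u \<in> ?V" for u
      proof -
        have "rep u \<in> ?V" using RV rep_in u by blast
        moreover have "rep (rep u) = rep u" using rep_eq rep_in by blast
        ultimately show ?thesis unfolding w_def w0_def P_def by simp
      qed
      moreover have "w x = 0" if "x \<notin> ?V" for x using that unfolding w_def w0_def P_def by simp
      moreover have "(\<Sum>u\<in>?V. (w u)\<^sup>2) = 1"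
        unfolding w_def using Npos by (simp add: power_divide sum_divide_distrib[symmetric] N_def)
      ultimately show ?thesis unfolding Z_def by blast
    qed
    ultimately show ?thesis by blast
  qed
  have Zne: "Z \<noteq> {}" using ne normal by blast
  have Zclosed: "closed Z"
  proof -
    have c1: "closed {w::'a\<Rightarrow>real. \<forall>u. u \<in> ?V \<longrightarrow> w (rep u) = 0}"
      by (intro closed_Collect_all closed_cond)
    have c2: "closed {w::'a\<Rightarrow>real. \<forall>x. x \<notin> ?V \<longrightarrow> w x = 0}"
      by (intro closed_Collect_all closed_cond)
    have c3: "closed {w::'a\<Rightarrow>real. (\<Sum>u\<in>?V. (w u)\<^sup>2) = 1}"
      by (intro closed_Collect_eq continuous_intros cont_coord)
    have "Z = {w. \<forall>u. u \<in> ?V \<longrightarrow> w (rep u) = 0} \<inter> {w. \<forall>x. x \<notin> ?V \<longrightarrow> w x = 0} \<inter>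
        {w. (\<Sum>u\<in>?V. (w u)\<^sup>2) = 1}" unfolding Z_def by blast
    then show ?thesis using c1 c2 c3 by (simp add: closed_Int)
  qed
  define B where "B = (PiE UNIV (\<lambda>x. if x \<in> ?V then {-1..1} else {0::real}))"
  have Bc: "compact B"
  proof -
    have "compactin (product_topology (\<lambda>i. euclidean) UNIV) B"
      unfolding B_def by (subst compactin_PiE) auto
    then show ?thesis by (simp add: euclidean_product_topology)
  qed
  have ZB: "Z \<subseteq> B"
  proof
    fix w assume w: "w \<in> Z"
    have "\<bar>w x\<bar> \<le> 1" if "x \<in> ?V" for x
    proof -
      have "(w x)\<^sup>2 \<le> (\<Sum>u\<in>?V. (w u)\<^sup>2)"
        using that fin by (intro member_le_sum) auto
      then show ?thesis using w unfolding Z_def by (simp add: abs_square_le_1)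
    qed
    then show "w \<in> B" using w unfolding B_def Z_def by (auto simp: abs_le_iff)
  qed
  have Zc: "compact Z"
  proof -
    have "compact (B \<inter> Z)" using Bc Zclosed by (rule compact_Int_closed)
    moreover have "B \<inter> Z = Z" using ZB by blast
    ultimately show ?thesis by simp
  qed
  have cs: "continuous_on Z (score G Sbar s)"
    unfolding score_def
    by (intro continuous_on_divide cont_qform) (use Zpos in force)
  obtain wm where wm: "wm \<in> Z" "\<forall>y\<in>Z. score G Sbar s y \<le> score G Sbar s wm"
    using continuous_attains_sup[OF Zc Zne cs] by blast
  show ?thesis
  proof (intro exI conjI ballI)
    show "?Q wm > 0" using Zpos wm(1) .
    fix x assume "x \<in> {score G Sbar s v | v. ?Q v > 0}"
    then obtain v where "x = score G Sbar s v" "?Q v > 0" by blast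
    then show "x \<le> score G Sbar s wm" using normal wm(2) by metis
  qed
qed


lemma witness:
  fixes G (structure)
  assumes grp: "group G" and fin: "finite (carrier G)" and Sb: "Sbar \<subseteq> carrier G"
    and a: "0 < \<alpha>" and t: "t \<in> S_alpha G Sbar \<alpha>"
  shows "\<exists>v. qform G (LH G Sbar) v > 0 \<and> score G Sbar t v \<ge> \<alpha>"
proof -
  let ?X = "{score G Sbar t v | v. qform G (LH G Sbar) v > 0}"
  have tS: "t \<in> Sbar" and im: "imp G Sbar t \<ge> \<alpha>" using t unfolding S_alpha_def by auto
  have ne: "?X \<noteq> {}"
  proof
    assume "?X = {}"
    then have "imp G Sbar t = 0" unfolding imp_def by (simp add: Let_def)
    then show False using im a by simp
  qed
  obtain v where v: "qform G (LH G Sbar) v > 0" "\<forall>x\<in>?X. x \<le> score G Sbar t v"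
    using attain[OF grp fin Sb tS ne] by blast
  have "Sup ?X = score G Sbar t v"
    by (rule cSup_eq_maximum) (use v in blast)+
  moreover have "imp G Sbar t = Sup ?X" unfolding imp_def Let_def by (simp only: if_not_P[OF ne])
  ultimately have "imp G Sbar t = score G Sbar t v" by simp
  then show ?thesis using v im by auto
qed

lemma score_facts:
  fixes G (structure)
  assumes grp: "group G" and fin: "finite (carrier G)" and Sb: "Sbar \<subseteq> carrier G"
    and v: "qform G (LH G Sbar) v > 0"
  shows "\<And>t. t \<in> Sbar \<Longrightarrow> score G Sbar t v \<ge> 0"
    and "(\<Sum>t\<in>Sbar. score G Sbar t v) = 1"
proof -
  have finS: "finite Sbar" using fin Sb finite_subset by blast
  show "score G Sbar t v \<ge> 0" if "t \<in> Sbar" for t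
    unfolding score_def using v qform_L[OF grp fin, of t v] that Sb
    by (intro divide_nonneg_pos) (auto intro!: mult_nonneg_nonneg Dq_nonneg less_imp_le[OF cf_pos])
  show "(\<Sum>t\<in>Sbar. score G Sbar t v) = 1"
    unfolding score_def sum_divide_distrib[symmetric] qform_LH[OF finS, symmetric] using v by simp
qed


theorem mainTheorem5:
  fixes G (structure) and S Sbar :: "'a set" and \<alpha> C :: real
  assumes "group G" and "finite (carrier G)" and "card (carrier G) \<ge> 2"
    and "symmetric_set G S" and "is_Sbar G S Sbar"
    and "0 < \<alpha>" and "\<alpha> < 1" and "C \<ge> 1"
  shows "\<exists>(l::nat) (s::nat \<Rightarrow> 'a) (v::nat \<Rightarrow> 'a \<Rightarrow> real).
    real l \<ge> \<alpha> / (C * (log 2 (real (card (carrier G))))\<^sup>2) * real (card (S_alpha G Sbar \<alpha>))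
    \<and> inj_on s {1..l} \<and> s ` {1..l} \<subseteq> S_alpha G Sbar \<alpha>
    \<and> (\<forall>i\<in>{1..l}. qform G (LH G Sbar) (v i) > 0 \<and> score G Sbar (s i) (v i) \<ge> \<alpha>)
    \<and> (\<forall>i\<in>{1..l}. \<forall>j\<in>{1..l}. j < i \<longrightarrow>
         score G Sbar (s i) (v j) \<le> \<alpha> / (C * (log 2 (real (card (carrier G))))\<^sup>2))"
proof -
  note grp = assms(1) and fin = assms(2) and a = assms(6)
  define eps where "eps = \<alpha> / (C * (log 2 (real (card (carrier G))))\<^sup>2)"
  define Sa where "Sa = S_alpha G Sbar \<alpha>"
  define Q where "Q = qform G (LH G Sbar)"
  have Sb: "Sbar \<subseteq> carrier G" using assms(4,5) unfolding symmetric_set_def is_Sbar_def by blast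
  have finS: "finite Sbar" using fin Sb finite_subset by blast
  have SaS: "Sa \<subseteq> Sbar" unfolding Sa_def S_alpha_def by blast
  have finSa: "finite Sa" using finS SaS finite_subset by blast
  have L1: "log 2 (real (card (carrier G))) \<ge> 1"
  proof -
    have "log 2 2 \<le> log 2 (real (card (carrier G)))"
      using assms(3) by (subst log_le_cancel_iff) auto
    then show ?thesis by simp
  qed
  have L2: "(log 2 (real (card (carrier G))))\<^sup>2 \<ge> 1" using L1
    by (metis one_le_power)
  have CL: "C * (log 2 (real (card (carrier G))))\<^sup>2 \<ge> 1"
    using assms(8) L2 by (metis mult_mono' mult_1 zero_le_one order_trans)
  have eps_pos: "eps > 0" unfolding eps_def using a CL by simp
  have eps_le: "eps \<le> \<alpha>" unfolding eps_def using a CL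
    by (simp add: divide_le_eq mult_le_cancel_left1 order_less_imp_le)
  define T where "T w = {t\<in>Sbar. score G Sbar t w \<ge> eps}" for w
  have Tcard: "real (card (T w)) \<le> 1 / eps" if w: "Q w > 0" for w
  proof -
    have nn: "\<And>t. t \<in> Sbar \<Longrightarrow> score G Sbar t w \<ge> 0" and s1: "(\<Sum>t\<in>Sbar. score G Sbar t w) = 1"
      using score_facts[OF grp fin Sb w[unfolded Q_def]] by auto
    have "real (card (T w)) * eps = (\<Sum>t\<in>T w. eps)" by simp
    also have "\<dots> \<le> (\<Sum>t\<in>T w. score G Sbar t w)" by (rule sum_mono) (simp add: T_def)
    also have "\<dots> \<le> (\<Sum>t\<in>Sbar. score G Sbar t w)"
      by (rule sum_mono2[OF finS]) (auto simp: T_def nn)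
    finally show ?thesis using s1 eps_pos by (simp add: le_divide_eq)
  qed
  define valid where "valid l s v \<longleftrightarrow> inj_on s {1..l} \<and> s ` {1..l} \<subseteq> Sa
    \<and> (\<forall>i\<in>{1..l}. Q (v i) > 0 \<and> score G Sbar (s i) (v i) \<ge> \<alpha>)
    \<and> (\<forall>i\<in>{1..l}. \<forall>j\<in>{1..l}. j < i \<longrightarrow> score G Sbar (s i) (v j) \<le> eps)"
    for l :: nat and s :: "nat \<Rightarrow> 'a" and v :: "nat \<Rightarrow> 'a \<Rightarrow> real"
  define K where "K = {l. \<exists>s v. valid l s v}"
  have K0: "0 \<in> K" unfolding K_def valid_def by auto
  have Kb: "K \<subseteq> {0..card Sa}"
  proof
    fix l assume "l \<in> K"
    then obtain s v where sv: "valid l s v" unfolding K_def by blast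
    then have "card (s ` {1..l}) = l" unfolding valid_def by (simp add: card_image)
    moreover have "card (s ` {1..l}) \<le> card Sa" using sv finSa unfolding valid_def by (intro card_mono) auto
    ultimately show "l \<in> {0..card Sa}" by simp
  qed
  have finK: "finite K" using Kb finite_subset by blast
  define lm where "lm = Max K"
  have "lm \<in> K" unfolding lm_def using finK K0 by (intro Max_in) auto
  then obtain s v where sv: "valid lm s v" unfolding K_def by blast
  have sT: "s j \<in> T (v j)" if "j \<in> {1..lm}" for j
  proof -
    have "s j \<in> Sa" "score G Sbar (s j) (v j) \<ge> \<alpha>" using sv that unfolding valid_def by auto
    then show ?thesis using SaS eps_le unfolding T_def by auto
  qed
  have cover: "Sa \<subseteq> (\<Union>j\<in>{1..lm}. T (v j))"
  proof
    fix t0 assume t0: "t0 \<in> Sa"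
    show "t0 \<in> (\<Union>j\<in>{1..lm}. T (v j))"
    proof (rule ccontr)
      assume nt: "t0 \<notin> (\<Union>j\<in>{1..lm}. T (v j))"
      obtain v0 where v0: "Q v0 > 0" "score G Sbar t0 v0 \<ge> \<alpha>"
        using witness[OF grp fin Sb a t0[unfolded Sa_def]] unfolding Q_def by blast
      define s' where "s' = s(Suc lm := t0)"
      define v' where "v' = v(Suc lm := v0)"
      have t0S: "t0 \<in> Sbar" using t0 SaS by blast
      have small: "score G Sbar t0 (v j) \<le> eps" if "j \<in> {1..lm}" for j
      proof -
        have "t0 \<notin> T (v j)" using nt that by blast
        then show ?thesis using t0S unfolding T_def by auto
      qed
      have ne: "t0 \<noteq> s j" if "j \<in> {1..lm}" for j
        using nt sT that by blast
      have iv: "{1..Suc lm} = insert (Suc lm) {1..lm}" by auto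
      have sv1: "inj_on s {1..lm}" and sv2: "\<And>i. i \<in> {1..lm} \<Longrightarrow> s i \<in> Sa"
        and sv3: "\<And>i. i \<in> {1..lm} \<Longrightarrow> Q (v i) > 0 \<and> score G Sbar (s i) (v i) \<ge> \<alpha>"
        and sv4: "\<And>i j. i \<in> {1..lm} \<Longrightarrow> j \<in> {1..lm} \<Longrightarrow> j < i \<Longrightarrow> score G Sbar (s i) (v j) \<le> eps"
        using sv unfolding valid_def by blast+
      have s'o: "s' i = s i" "v' i = v i" if "i \<in> {1..lm}" for i
        using that unfolding s'_def v'_def by auto
      have s'n: "s' (Suc lm) = t0" "v' (Suc lm) = v0" unfolding s'_def v'_def by simp_all
      have c1: "inj_on s' {1..Suc lm}"
      proof -
        have "inj_on s' {1..lm} = inj_on s {1..lm}" by (rule inj_on_cong) (rule s'o(1))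
        then have "inj_on s' {1..lm}" using sv1 by simp
        moreover have "s' (Suc lm) \<notin> s' ` ({1..lm} - {Suc lm})"
        proof
          assume "s' (Suc lm) \<in> s' ` ({1..lm} - {Suc lm})"
          then obtain j where j: "j \<in> {1..lm}" "s' (Suc lm) = s' j" by blast
          then have "t0 = s j" using s'n(1) s'o(1)[OF j(1)] by simp
          then show False using ne[OF j(1)] by simp
        qed
        ultimately show ?thesis unfolding iv inj_on_insert by blast
      qed
      have c2: "s' ` {1..Suc lm} \<subseteq> Sa"
      proof
        fix x assume "x \<in> s' ` {1..Suc lm}"
        then obtain i where i: "i \<in> {1..Suc lm}" "x = s' i" by blast
        show "x \<in> Sa"
        proof (cases "i = Suc lm")
          case True then show ?thesis using i s'n t0 by simp
        next
          case False then have "i \<in> {1..lm}" using i by auto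
          then show ?thesis using i s'o sv2 by simp
        qed
      qed
      have c3: "\<forall>i\<in>{1..Suc lm}. Q (v' i) > 0 \<and> score G Sbar (s' i) (v' i) \<ge> \<alpha>"
      proof
        fix i assume i: "i \<in> {1..Suc lm}"
        show "Q (v' i) > 0 \<and> score G Sbar (s' i) (v' i) \<ge> \<alpha>"
        proof (cases "i = Suc lm")
          case True then show ?thesis using s'n v0 by simp
        next
          case False then have "i \<in> {1..lm}" using i by auto
          then show ?thesis using s'o sv3 by simp
        qed
      qed
      have c4: "\<forall>i\<in>{1..Suc lm}. \<forall>j\<in>{1..Suc lm}. j < i \<longrightarrow> score G Sbar (s' i) (v' j) \<le> eps"
      proof (intro ballI impI)
        fix i j assume i: "i \<in> {1..Suc lm}" and j: "j \<in> {1..Suc lm}" and ji: "j < i"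
        then have j': "j \<in> {1..lm}" by auto
        show "score G Sbar (s' i) (v' j) \<le> eps"
        proof (cases "i = Suc lm")
          case True
          then show ?thesis using small[OF j'] s'o(2)[OF j'] s'n by simp
        next
          case False
          then have i': "i \<in> {1..lm}" using i by auto
          then show ?thesis using sv4[OF i' j' ji] s'o[OF i'] s'o[OF j'] by simp
        qed
      qed
      have "valid (Suc lm) s' v'" unfolding valid_def using c1 c2 c3 c4 by blast
      then have "Suc lm \<in> K" unfolding K_def by blast
      then have "Suc lm \<le> lm" unfolding lm_def using finK Max_ge by blast
      then show False by simp
    qed
  qed
  have "real (card Sa) \<le> real (card (\<Union>j\<in>{1..lm}. T (v j)))"
    using cover finS by (intro of_nat_mono card_mono) (auto simp: T_def)
  also have "\<dots> \<le> real (\<Sum>j\<in>{1..lm}. card (T (v j)))"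
    by (intro of_nat_mono card_UN_le) simp
  also have "\<dots> = (\<Sum>j\<in>{1..lm}. real (card (T (v j))))" by simp
  also have "\<dots> \<le> (\<Sum>j\<in>{1..lm}. 1 / eps)"
    by (intro sum_mono Tcard) (use sv in \<open>auto simp: valid_def\<close>)
  also have "\<dots> = real lm / eps" by simp
  finally have "real (card Sa) \<le> real lm / eps" .
  then have bound: "eps * real (card Sa) \<le> real lm" using eps_pos by (simp add: field_simps)
  show ?thesis
    using bound sv unfolding valid_def eps_def Sa_def Q_def by blast
qed

end
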